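(* Let $A$ be a sequence algebra and $X$ an algebraic (left) $A$-module such that for every $x\in X$, $\mathbf p^n\cdot x=0$ for all large $n$, and $\mathbf p^n\cdot x=0$ for all $n$ implies $x=0$. Suppose each $X_n:=\mathbf p^n\cdot X$ carries a norm $\|\cdot\|_n$. Let $M_X:=\{n:X_n\ne0\}$ and let $c_{00}^+(X)$ be the set of finitely supported nonnegative real sequences $\xi$ with $\xi_n=0$ for $n\notin M_X$. Let $f:c_{00}^+(X)\to\mathbb R$ satisfy: (i) $f(\xi)>0$ for $\xi\ne0$; (ii) $f(\lambda\xi)=\lambda f(\xi)$ for $\lambda>0$; (iii) $\xi\le\eta$ implies $f(\xi)\le f(\eta)$; (iv) $f(|a|\xi)\le\|a\|f(\xi)$ for $a\in A$, where $|a|\xi=(|a_n|\xi_n)_n$; (v) $f(\xi+\eta)\le f(\xi)+f(\eta)$. For $x\in X$ put $\|x\|:=f(\xi)$ with $\xi_n:=\|\mathbf p^n\cdot x\|_n$. Then $\|\cdot\|$ is a norm making $X$ a (contractive) normed homogeneous $A$-module. If in addition $f(\mathbf p^n)=1$ for all $n\in M_X$, then the restriction of $\|\cdot\|$ to each $X_n$ coincides with $\|\cdot\|_n$.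
   Context: A sequence algebra is a normed algebra of complex sequences with coordinatewise operations containing $c_{00}$ as a dense subalgebra, with $\|\mathbf p^n\|=1$, where $\mathbf p^n$ has $1$ in place $n$ and $0$ elsewhere; $f(0)$ is understood as $0$ (consistent with (ii)). A normed module is contractive if $\|a\cdot x\|\le\|a\|\|x\|$. A normed $A$-module is homogeneous if for $x,y$, $\|\mathbf p^n\cdot x\|\le\|\mathbf p^n\cdot y\|$ for all $n$ implies $\|x\|\le\|y\|$. *)

theory Defs
  imports Complex_Main
begin

text \<open>Unit sequences: p n has 1 in place n and 0 elsewhere (complex-valued, as elements of A),
  and its real-valued counterpart (as an element of c00^+).\<close>
definition pc :: "nat \<Rightarrow> nat \<Rightarrow> complex" where
  "pc n = (\<lambda>k. if k = n then 1 else 0)"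

definition pr :: "nat \<Rightarrow> nat \<Rightarrow> real" where
  "pr n = (\<lambda>k. if k = n then 1 else 0)"

definition c00 :: "(nat \<Rightarrow> complex) set" where
  "c00 = {a. finite {n. a n \<noteq> 0}}"

definition seq_algebra :: "(nat \<Rightarrow> complex) set \<Rightarrow> ((nat \<Rightarrow> complex) \<Rightarrow> real) \<Rightarrow> bool" where
  "seq_algebra A nA \<longleftrightarrow>
     (\<lambda>n. 0) \<in> A \<and>
     (\<forall>a\<in>A. \<forall>b\<in>A. (\<lambda>n. a n + b n) \<in> A) \<and>
     (\<forall>a\<in>A. \<forall>b\<in>A. (\<lambda>n. a n * b n) \<in> A) \<and>
     (\<forall>c. \<forall>a\<in>A. (\<lambda>n. c * a n) \<in> A) \<and>
     (\<forall>a\<in>A. nA a \<ge> 0) \<and>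
     (\<forall>a\<in>A. nA a = 0 \<longleftrightarrow> a = (\<lambda>n. 0)) \<and>
     (\<forall>a\<in>A. \<forall>b\<in>A. nA (\<lambda>n. a n + b n) \<le> nA a + nA b) \<and>
     (\<forall>c. \<forall>a\<in>A. nA (\<lambda>n. c * a n) = cmod c * nA a) \<and>
     (\<forall>a\<in>A. \<forall>b\<in>A. nA (\<lambda>n. a n * b n) \<le> nA a * nA b) \<and>
     c00 \<subseteq> A \<and>
     (\<forall>a\<in>A. \<forall>e>0. \<exists>c\<in>c00. nA (\<lambda>n. a n - c n) < e) \<and>
     (\<forall>n. nA (pc n) = 1)"

definition cvec :: "(complex \<Rightarrow> 'x::ab_group_add \<Rightarrow> 'x) \<Rightarrow> bool" where
  "cvec sm \<longleftrightarrow>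
     (\<forall>c x y. sm c (x + y) = sm c x + sm c y) \<and>
     (\<forall>c d x. sm (c + d) x = sm c x + sm d x) \<and>
     (\<forall>c d x. sm c (sm d x) = sm (c * d) x) \<and>
     (\<forall>x. sm 1 x = x)"

definition alg_module ::
  "(nat \<Rightarrow> complex) set \<Rightarrow> (complex \<Rightarrow> 'x::ab_group_add \<Rightarrow> 'x) \<Rightarrow> ((nat \<Rightarrow> complex) \<Rightarrow> 'x \<Rightarrow> 'x) \<Rightarrow> bool" where
  "alg_module A sm act \<longleftrightarrow>
     cvec sm \<and>
     (\<forall>a\<in>A. \<forall>x y. act a (x + y) = act a x + act a y) \<and>
     (\<forall>a\<in>A. \<forall>b\<in>A. \<forall>x. act (\<lambda>n. a n + b n) x = act a x + act b x) \<and>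
     (\<forall>a\<in>A. \<forall>c x. act (\<lambda>n. c * a n) x = sm c (act a x)) \<and>
     (\<forall>a\<in>A. \<forall>c x. act a (sm c x) = sm c (act a x)) \<and>
     (\<forall>a\<in>A. \<forall>b\<in>A. \<forall>x. act (\<lambda>n. a n * b n) x = act a (act b x))"

definition norm_on :: "'x::ab_group_add set \<Rightarrow> (complex \<Rightarrow> 'x \<Rightarrow> 'x) \<Rightarrow> ('x \<Rightarrow> real) \<Rightarrow> bool" where
  "norm_on S sm N \<longleftrightarrow>
     (\<forall>x\<in>S. N x \<ge> 0) \<and>
     (\<forall>x\<in>S. N x = 0 \<longleftrightarrow> x = 0) \<and>
     (\<forall>x\<in>S. \<forall>y\<in>S. N (x + y) \<le> N x + N y) \<and>
     (\<forall>c. \<forall>x\<in>S. N (sm c x) = cmod c * N x)"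

definition Xn :: "((nat \<Rightarrow> complex) \<Rightarrow> 'x \<Rightarrow> 'x) \<Rightarrow> nat \<Rightarrow> 'x set" where
  "Xn act n = range (act (pc n))"

definition MX :: "((nat \<Rightarrow> complex) \<Rightarrow> 'x::zero \<Rightarrow> 'x) \<Rightarrow> nat set" where
  "MX act = {n. Xn act n \<noteq> {0}}"

definition c00plus :: "((nat \<Rightarrow> complex) \<Rightarrow> 'x::zero \<Rightarrow> 'x) \<Rightarrow> (nat \<Rightarrow> real) set" where
  "c00plus act = {\<xi>. finite {n. \<xi> n \<noteq> 0} \<and> (\<forall>n. \<xi> n \<ge> 0) \<and> (\<forall>n. n \<notin> MX act \<longrightarrow> \<xi> n = 0)}"

definition induced_norm ::
  "((nat \<Rightarrow> real) \<Rightarrow> real) \<Rightarrow> (nat \<Rightarrow> 'x \<Rightarrow> real) \<Rightarrow> ((nat \<Rightarrow> complex) \<Rightarrow> 'x \<Rightarrow> 'x) \<Rightarrow> 'x \<Rightarrow> real" where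
  "induced_norm f nn act x = f (\<lambda>n. nn n (act (pc n) x))"

end

theory Submission
  imports Defs
begin

theorem proposition1p9:
  fixes A :: "(nat \<Rightarrow> complex) set" and nA :: "(nat \<Rightarrow> complex) \<Rightarrow> real"
    and sm :: "complex \<Rightarrow> 'x::ab_group_add \<Rightarrow> 'x"
    and act :: "(nat \<Rightarrow> complex) \<Rightarrow> 'x \<Rightarrow> 'x"
    and nn :: "nat \<Rightarrow> 'x \<Rightarrow> real"
    and f :: "(nat \<Rightarrow> real) \<Rightarrow> real"
  assumes A: "seq_algebra A nA"
    and X: "alg_module A sm act"
    and fin: "\<And>x. \<exists>N. \<forall>n\<ge>N. act (pc n) x = 0"
    and sep: "\<And>x. (\<forall>n. act (pc n) x = 0) \<Longrightarrow> x = 0"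
    and nn: "\<And>n. norm_on (Xn act n) sm (nn n)"
    and f_pos: "\<And>\<xi>. \<xi> \<in> c00plus act \<Longrightarrow> \<xi> \<noteq> (\<lambda>n. 0) \<Longrightarrow> f \<xi> > 0"
    and f_hom: "\<And>\<xi> l. \<xi> \<in> c00plus act \<Longrightarrow> l > 0 \<Longrightarrow> f (\<lambda>n. l * \<xi> n) = l * f \<xi>"
    and f_mono: "\<And>\<xi> \<eta>. \<xi> \<in> c00plus act \<Longrightarrow> \<eta> \<in> c00plus act \<Longrightarrow> (\<forall>n. \<xi> n \<le> \<eta> n) \<Longrightarrow> f \<xi> \<le> f \<eta>"
    and f_mod: "\<And>\<xi> a. \<xi> \<in> c00plus act \<Longrightarrow> a \<in> A \<Longrightarrow> f (\<lambda>n. cmod (a n) * \<xi> n) \<le> nA a * f \<xi>"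
    and f_sub: "\<And>\<xi> \<eta>. \<xi> \<in> c00plus act \<Longrightarrow> \<eta> \<in> c00plus act \<Longrightarrow> f (\<lambda>n. \<xi> n + \<eta> n) \<le> f \<xi> + f \<eta>"
  shows "norm_on UNIV sm (induced_norm f nn act)
         \<and> (\<forall>a\<in>A. \<forall>x. induced_norm f nn act (act a x) \<le> nA a * induced_norm f nn act x)
         \<and> (\<forall>x y. (\<forall>n. induced_norm f nn act (act (pc n) x) \<le> induced_norm f nn act (act (pc n) y))
                  \<longrightarrow> induced_norm f nn act x \<le> induced_norm f nn act y)
         \<and> ((\<forall>n\<in>MX act. f (pr n) = 1) \<longrightarrow>
              (\<forall>n. \<forall>x\<in>Xn act n. induced_norm f nn act x = nn n x))"
proof -
  define N where "N = induced_norm f nn act"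
  define xi where "xi = (\<lambda>x n. nn n (act (pc n) x))"
  have Nxi: "\<And>x. N x = f (xi x)" unfolding N_def xi_def induced_norm_def by simp
  have cA: "c00 \<subseteq> A" using A unfolding seq_algebra_def by blast
  have pcA: "\<And>n. pc n \<in> A"
  proof -
    fix n have "{k. pc n k \<noteq> 0} = {n}" by (auto simp: pc_def)
    then have "pc n \<in> c00" unfolding c00_def by simp
    then show "pc n \<in> A" using cA by blast
  qed
  have cv: "cvec sm" using X unfolding alg_module_def by blast
  have sm_add: "\<And>c d x. sm (c + d) x = sm c x + sm d x" using cv unfolding cvec_def by blast
  have act_add: "\<And>a x y. a \<in> A \<Longrightarrow> act a (x + y) = act a x + act a y"
    using X unfolding alg_module_def by blast
  have act_sc: "\<And>a c x. a \<in> A \<Longrightarrow> act (\<lambda>n. c * a n) x = sm c (act a x)"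
    using X unfolding alg_module_def by blast
  have act_sm: "\<And>a c x. a \<in> A \<Longrightarrow> act a (sm c x) = sm c (act a x)"
    using X unfolding alg_module_def by blast
  have act_mul: "\<And>a b x. a \<in> A \<Longrightarrow> b \<in> A \<Longrightarrow> act (\<lambda>n. a n * b n) x = act a (act b x)"
    using X unfolding alg_module_def by blast
  have sm0: "\<And>x. sm 0 x = 0"
  proof -
    fix x have "sm (0+0) x = sm 0 x + sm 0 x" by (rule sm_add)
    then show "sm 0 x = 0" by simp
  qed
  have act0: "\<And>a. a \<in> A \<Longrightarrow> act a 0 = 0"
  proof -
    fix a assume "a \<in> A"
    then have "act a (0+0) = act a 0 + act a 0" by (rule act_add)
    then show "act a 0 = 0" by simp
  qed
  have actz: "\<And>x. act (\<lambda>n. 0) x = 0"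
  proof -
    fix x
    have "act (\<lambda>n. 0 * pc 0 n) x = sm 0 (act (pc 0) x)" using act_sc pcA by blast
    then show "act (\<lambda>n. 0) x = 0" using sm0 by simp
  qed
  have pcpc: "\<And>m n x. act (pc m) (act (pc n) x) = (if m = n then act (pc n) x else 0)"
  proof -
    fix m n x
    have e: "act (\<lambda>k. pc m k * pc n k) x = act (pc m) (act (pc n) x)" using act_mul pcA by blast
    show "act (pc m) (act (pc n) x) = (if m = n then act (pc n) x else 0)"
    proof (cases "m = n")
      case True
      have "(\<lambda>k. pc m k * pc n k) = pc n" using True by (auto simp: pc_def)
      then show ?thesis using e True by simp
    next
      case False
      have "(\<lambda>k. pc m k * pc n k) = (\<lambda>k. 0)" using False by (auto simp: pc_def)
      then show ?thesis using e False actz by simp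
    qed
  qed
  have pca: "\<And>a n x. a \<in> A \<Longrightarrow> act (pc n) (act a x) = sm (a n) (act (pc n) x)"
  proof -
    fix a n x assume a: "a \<in> A"
    have "act (\<lambda>k. pc n k * a k) x = act (pc n) (act a x)" using act_mul pcA a by blast
    moreover have "(\<lambda>k. pc n k * a k) = (\<lambda>k. a n * pc n k)" by (auto simp: pc_def)
    moreover have "act (\<lambda>k. a n * pc n k) x = sm (a n) (act (pc n) x)" using act_sc pcA by blast
    ultimately show "act (pc n) (act a x) = sm (a n) (act (pc n) x)" by simp
  qed
  have inX: "\<And>n x. act (pc n) x \<in> Xn act n" unfolding Xn_def by simp
  have X0: "\<And>n. 0 \<in> Xn act n" using inX act0 pcA by metis
  have nnge: "\<And>n v. v \<in> Xn act n \<Longrightarrow> nn n v \<ge> 0" using nn unfolding norm_on_def by blast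
  have nn0iff: "\<And>n v. v \<in> Xn act n \<Longrightarrow> nn n v = 0 \<longleftrightarrow> v = 0" using nn unfolding norm_on_def by blast
  have nntri: "\<And>n v w. v \<in> Xn act n \<Longrightarrow> w \<in> Xn act n \<Longrightarrow> nn n (v + w) \<le> nn n v + nn n w"
    using nn unfolding norm_on_def by blast
  have nnsc: "\<And>n c v. v \<in> Xn act n \<Longrightarrow> nn n (sm c v) = cmod c * nn n v"
    using nn unfolding norm_on_def by blast
  have nn0: "\<And>n. nn n 0 = 0" using nn0iff X0 by blast
  have xiC: "\<And>x. xi x \<in> c00plus act"
  proof -
    fix x
    obtain K where K: "\<forall>n\<ge>K. act (pc n) x = 0" using fin by blast
    have "{n. xi x n \<noteq> 0} \<subseteq> {..<K}"
      using K nn0 by (auto simp: xi_def) (metis not_le)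
    then have "finite {n. xi x n \<noteq> 0}" using finite_subset by blast
    moreover have "\<forall>n. xi x n \<ge> 0" using nnge inX by (simp add: xi_def)
    moreover have "\<forall>n. n \<notin> MX act \<longrightarrow> xi x n = 0"
    proof (intro allI impI)
      fix n assume "n \<notin> MX act"
      then have "Xn act n = {0}" unfolding MX_def by simp
      then have "act (pc n) x = 0" using inX by blast
      then show "xi x n = 0" using nn0 by (simp add: xi_def)
    qed
    ultimately show "xi x \<in> c00plus act" unfolding c00plus_def by blast
  qed
  have zC: "(\<lambda>n. 0) \<in> c00plus act" unfolding c00plus_def by simp
  have f0: "f (\<lambda>n. 0) = 0"
  proof -
    have "f (\<lambda>n. 2 * (0::real)) = 2 * f (\<lambda>n. 0)" using f_hom[OF zC, of 2] by simp
    then show ?thesis by simp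
  qed
  have fge: "\<And>\<xi>. \<xi> \<in> c00plus act \<Longrightarrow> f \<xi> \<ge> 0"
    using f_pos f0 by (metis less_eq_real_def)
  have prC: "\<And>n. n \<in> MX act \<Longrightarrow> pr n \<in> c00plus act"
  proof -
    fix n assume "n \<in> MX act"
    moreover have "{k. pr n k \<noteq> 0} = {n}" by (auto simp: pr_def)
    ultimately show "pr n \<in> c00plus act" unfolding c00plus_def by (auto simp: pr_def)
  qed
  have fpr: "\<And>n c. n \<in> MX act \<Longrightarrow> c \<ge> 0 \<Longrightarrow> f (\<lambda>m. c * pr n m) = c * f (pr n)"
  proof -
    fix n and c :: real assume n: "n \<in> MX act" and c: "c \<ge> 0"
    show "f (\<lambda>m. c * pr n m) = c * f (pr n)"
    proof (cases "c = 0")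
      case True then show ?thesis using f0 by simp
    next
      case False then show ?thesis using f_hom[OF prC[OF n]] c by simp
    qed
  qed
  have prpos: "\<And>n. n \<in> MX act \<Longrightarrow> f (pr n) > 0"
  proof -
    fix n assume n: "n \<in> MX act"
    have "pr n n \<noteq> 0" by (simp add: pr_def)
    then have "pr n \<noteq> (\<lambda>k. 0)" by (metis)
    then show "f (pr n) > 0" using f_pos prC n by blast
  qed
  have inMX: "\<And>n v. v \<in> Xn act n \<Longrightarrow> v \<noteq> 0 \<Longrightarrow> n \<in> MX act"
    unfolding MX_def by auto
  have xipc: "\<And>n x. xi (act (pc n) x) = (\<lambda>m. xi x n * pr n m)"
    by (rule ext) (auto simp: xi_def pcpc pr_def nn0)
  have Npc: "\<And>n x. N (act (pc n) x) = xi x n * f (pr n) \<or> (xi x n = 0 \<and> N (act (pc n) x) = 0)"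
  proof -
    fix n x
    show "N (act (pc n) x) = xi x n * f (pr n) \<or> (xi x n = 0 \<and> N (act (pc n) x) = 0)"
    proof (cases "xi x n = 0")
      case True
      then have "xi (act (pc n) x) = (\<lambda>m. 0)" using xipc by simp
      then show ?thesis using True Nxi f0 by simp
    next
      case False
      then have "act (pc n) x \<noteq> 0" using nn0 by (auto simp: xi_def)
      then have n: "n \<in> MX act" using inMX inX by blast
      have "xi x n \<ge> 0" using xiC unfolding c00plus_def by blast
      then show ?thesis using fpr[OF n] Nxi xipc by simp
    qed
  qed
  have P1: "norm_on UNIV sm N"
    unfolding norm_on_def
  proof (intro conjI ballI allI)
    fix x show "N x \<ge> 0" using Nxi fge xiC by simp
  next
    fix x :: 'x
    show "N x = 0 \<longleftrightarrow> x = 0"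
    proof
      assume "N x = 0"
      then have "xi x = (\<lambda>n. 0)" using f_pos xiC Nxi by (metis less_irrefl)
      then have "\<forall>n. act (pc n) x = 0" using nn0iff inX by (metis xi_def)
      then show "x = 0" using sep by blast
    next
      assume "x = 0"
      then have "xi x = (\<lambda>n. 0)" by (auto simp: xi_def act0 pcA nn0)
      then show "N x = 0" using Nxi f0 by simp
    qed
  next
    fix x y :: 'x
    have le: "\<forall>n. xi (x + y) n \<le> xi x n + xi y n"
      by (simp add: xi_def act_add pcA nntri inX)
    have C: "(\<lambda>n. xi x n + xi y n) \<in> c00plus act"
    proof -
      have "{n. xi x n + xi y n \<noteq> 0} \<subseteq> {n. xi x n \<noteq> 0} \<union> {n. xi y n \<noteq> 0}" by auto
      moreover have "finite ({n. xi x n \<noteq> 0} \<union> {n. xi y n \<noteq> 0})"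
        using xiC[of x] xiC[of y] unfolding c00plus_def by blast
      ultimately show ?thesis using xiC[of x] xiC[of y] finite_subset
        unfolding c00plus_def by (simp add: add_nonneg_nonneg) blast
    qed
    have "f (xi (x + y)) \<le> f (\<lambda>n. xi x n + xi y n)" using f_mono[OF xiC C] le by blast
    also have "\<dots> \<le> f (xi x) + f (xi y)" using f_sub[OF xiC xiC] .
    finally show "N (x + y) \<le> N x + N y" using Nxi by simp
  next
    fix c x
    have e: "xi (sm c x) = (\<lambda>n. cmod c * xi x n)"
      by (rule ext) (simp add: xi_def act_sm pcA nnsc inX)
    show "N (sm c x) = cmod c * N x"
    proof (cases "c = 0")
      case True
      then have "xi (sm c x) = (\<lambda>n. 0)" using e by simp
      then show ?thesis using True Nxi f0 by simp
    next
      case False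
      then show ?thesis using e Nxi f_hom[OF xiC] by simp
    qed
  qed
  have P2: "\<forall>a\<in>A. \<forall>x. N (act a x) \<le> nA a * N x"
  proof (intro ballI allI)
    fix a x assume a: "a \<in> A"
    have "xi (act a x) = (\<lambda>n. cmod (a n) * xi x n)"
      by (rule ext) (simp add: xi_def pca a nnsc inX)
    then show "N (act a x) \<le> nA a * N x" using Nxi f_mod[OF xiC a] by simp
  qed
  have P3: "\<forall>x y. (\<forall>n. N (act (pc n) x) \<le> N (act (pc n) y)) \<longrightarrow> N x \<le> N y"
  proof (intro allI impI)
    fix x y assume H: "\<forall>n. N (act (pc n) x) \<le> N (act (pc n) y)"
    have "\<forall>n. xi x n \<le> xi y n"
    proof
      fix n
      have gy: "xi y n \<ge> 0" using xiC unfolding c00plus_def by blast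
      show "xi x n \<le> xi y n"
      proof (cases "xi x n = 0")
        case True then show ?thesis using gy by simp
      next
        case False
        then have "act (pc n) x \<noteq> 0" using nn0 by (auto simp: xi_def)
        then have n: "n \<in> MX act" using inMX inX by blast
        have p: "f (pr n) > 0" using prpos n .
        have gx: "xi x n \<ge> 0" using xiC unfolding c00plus_def by blast
        have "N (act (pc n) x) = xi x n * f (pr n)" using Npc False by blast
        moreover have "N (act (pc n) y) = xi y n * f (pr n)" using Npc[of n y] by auto
        ultimately have "xi x n * f (pr n) \<le> xi y n * f (pr n)" using H by metis
        then show ?thesis using p by simp
      qed
    qed
    then show "N x \<le> N y" using f_mono[OF xiC xiC] Nxi by simp
  qed
  have P4: "(\<forall>n\<in>MX act. f (pr n) = 1) \<longrightarrow> (\<forall>n. \<forall>x\<in>Xn act n. N x = nn n x)"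
  proof (intro impI allI ballI)
    fix n x assume H: "\<forall>n\<in>MX act. f (pr n) = 1" and x: "x \<in> Xn act n"
    obtain z where z: "x = act (pc n) z" using x unfolding Xn_def by blast
    have xn: "xi z n = nn n x" using z by (simp add: xi_def)
    show "N x = nn n x"
    proof (cases "x = 0")
      case True
      then show ?thesis using Npc[of n z] z xn nn0 by auto
    next
      case False
      then have "n \<in> MX act" using inMX x by blast
      then show ?thesis using Npc[of n z] z xn H by auto
    qed
  qed
  show ?thesis using P1 P2 P3 P4 unfolding N_def by blast
qed

end
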